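(* Consider an instance with $n$ agents, $m$ indivisible items and binary additive valuations, and fix a stable allocation $\chi$ with profile $(h_1,\dots,h_n)$ (notation as in the context). Define $p_d,q_d,r_d,s_d$ as follows, for integers $d\ge0$: $p_d=\{i: h_i=d \text{ and } \chi \text{ admits a transfer } i\to j \text{ for some } j \text{ with } h_j=d-1\}$, $q_d=\{i: h_i=d \text{ and } \chi \text{ admits a transfer } k\to i \text{ for some } k \text{ with } h_k=d+1\}$, $r_d=\{i:h_i=d,\ i\notin p_d\cup q_d\}$, $s_d=p_d\cup q_{d-1}$ (with $q_{-1}=\emptyset$). Then $\mathsf{layer}_d=r_d$ and $\mathsf{layer}^-_d=s_d$ for every $d$.
   Context: Agents $[n]$, items $[m]$. Each agent $i$ has a set $L_i\subseteq[m]$ of liked items and valuation $v_i(S)=|S\cap L_i|$. An allocation $\chi=(\chi_1,\dots,\chi_n)$ is a tuple of pairwise disjoint subsets of $[m]$; it is clean if $\chi_i\subseteq L_i$ for all $i$, and max-USW if it maximizes $\sum_i v_i(\chi_i)$. Throughout, "allocation" means a clean max-USW allocation. Profile: $(h_1,\dots,h_n)$, $h_i=|\chi_i|$. Given $\chi$, form a directed graph on $[n]$ with an arc $(i,i')$, $i\ne i'$, whenever some $o\in\chi_i$ has $o\in L_{i'}$; $\chi$ admits a transfer $u\to v$ if there is a simple directed path from $u$ to $v$ with at least one arc. A transfer is narrowing if $h_u\ge h_v+2$; $\chi$ is stable if it admits no narrowing transfer. For an integer $d\ge0$, $\mathsf{layer}_d$ is the set of agents $i$ with $|\chi'_i|=d$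 for every stable allocation $\chi'$; for an integer $d\ge1$, $\mathsf{layer}^-_d$ is the set of agents $i$ such that $\{|\chi'_i|:\chi' \text{ stable}\}=\{d-1,d\}$. *)

theory Defs
  imports Main
begin

text \<open>Agents are 0..<n, items are 0..<m; L i is the set of items liked by agent i.\<close>

definition is_alloc :: "nat \<Rightarrow> nat \<Rightarrow> (nat \<Rightarrow> nat set) \<Rightarrow> bool" where
  "is_alloc n m \<chi> \<longleftrightarrow> (\<forall>i<n. \<chi> i \<subseteq> {0..<m}) \<and>
      (\<forall>i<n. \<forall>j<n. i \<noteq> j \<longrightarrow> \<chi> i \<inter> \<chi> j = {})"

definition clean :: "nat \<Rightarrow> (nat \<Rightarrow> nat set) \<Rightarrow> (nat \<Rightarrow> nat set) \<Rightarrow> bool" where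
  "clean n L \<chi> \<longleftrightarrow> (\<forall>i<n. \<chi> i \<subseteq> L i)"

definition usw :: "nat \<Rightarrow> (nat \<Rightarrow> nat set) \<Rightarrow> (nat \<Rightarrow> nat set) \<Rightarrow> nat" where
  "usw n L \<chi> = (\<Sum>i<n. card (\<chi> i \<inter> L i))"

definition max_usw :: "nat \<Rightarrow> nat \<Rightarrow> (nat \<Rightarrow> nat set) \<Rightarrow> (nat \<Rightarrow> nat set) \<Rightarrow> bool" where
  "max_usw n m L \<chi> \<longleftrightarrow> is_alloc n m \<chi> \<and>
      (\<forall>\<chi>'. is_alloc n m \<chi>' \<longrightarrow> usw n L \<chi>' \<le> usw n L \<chi>)"

text \<open>"allocation" in the paper's sense: clean and max-USW\<close>
definition good_alloc :: "nat \<Rightarrow> nat \<Rightarrow> (nat \<Rightarrow> nat set) \<Rightarrow> (nat \<Rightarrow> nat set) \<Rightarrow> bool" where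
  "good_alloc n m L \<chi> \<longleftrightarrow> is_alloc n m \<chi> \<and> clean n L \<chi> \<and> max_usw n m L \<chi>"

definition arc :: "nat \<Rightarrow> (nat \<Rightarrow> nat set) \<Rightarrow> (nat \<Rightarrow> nat set) \<Rightarrow> nat \<Rightarrow> nat \<Rightarrow> bool" where
  "arc n L \<chi> i i' \<longleftrightarrow> i < n \<and> i' < n \<and> i \<noteq> i' \<and> (\<exists>x\<in>\<chi> i. x \<in> L i')"

definition transfer :: "nat \<Rightarrow> (nat \<Rightarrow> nat set) \<Rightarrow> (nat \<Rightarrow> nat set) \<Rightarrow> nat \<Rightarrow> nat \<Rightarrow> bool" where
  "transfer n L \<chi> u v \<longleftrightarrow> (\<exists>ps. length ps \<ge> 2 \<and> distinct ps \<and> hd ps = u \<and> last ps = v \<and>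
      (\<forall>k. Suc k < length ps \<longrightarrow> arc n L \<chi> (ps ! k) (ps ! Suc k)))"

definition stable :: "nat \<Rightarrow> nat \<Rightarrow> (nat \<Rightarrow> nat set) \<Rightarrow> (nat \<Rightarrow> nat set) \<Rightarrow> bool" where
  "stable n m L \<chi> \<longleftrightarrow> good_alloc n m L \<chi> \<and>
      \<not> (\<exists>u<n. \<exists>v<n. transfer n L \<chi> u v \<and> card (\<chi> u) \<ge> card (\<chi> v) + 2)"

definition layer :: "nat \<Rightarrow> nat \<Rightarrow> (nat \<Rightarrow> nat set) \<Rightarrow> nat \<Rightarrow> nat set" where
  "layer n m L d = {i. i < n \<and> (\<forall>\<chi>'. stable n m L \<chi>' \<longrightarrow> card (\<chi>' i) = d)}"

definition layer_minus :: "nat \<Rightarrow> nat \<Rightarrow> (nat \<Rightarrow> nat set) \<Rightarrow> nat \<Rightarrow> nat set" where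
  "layer_minus n m L d = {i. i < n \<and> {card (\<chi>' i) | \<chi>'. stable n m L \<chi>'} = {d - 1, d}}"

definition pset :: "nat \<Rightarrow> (nat \<Rightarrow> nat set) \<Rightarrow> (nat \<Rightarrow> nat set) \<Rightarrow> nat \<Rightarrow> nat set" where
  "pset n L \<chi> d = {i. i < n \<and> card (\<chi> i) = d \<and>
      (\<exists>j<n. int (card (\<chi> j)) = int d - 1 \<and> transfer n L \<chi> i j)}"

definition qset :: "nat \<Rightarrow> (nat \<Rightarrow> nat set) \<Rightarrow> (nat \<Rightarrow> nat set) \<Rightarrow> nat \<Rightarrow> nat set" where
  "qset n L \<chi> d = {i. i < n \<and> card (\<chi> i) = d \<and>
      (\<exists>k<n. card (\<chi> k) = d + 1 \<and> transfer n L \<chi> k i)}"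

definition rset :: "nat \<Rightarrow> (nat \<Rightarrow> nat set) \<Rightarrow> (nat \<Rightarrow> nat set) \<Rightarrow> nat \<Rightarrow> nat set" where
  "rset n L \<chi> d = {i. i < n \<and> card (\<chi> i) = d \<and> i \<notin> pset n L \<chi> d \<union> qset n L \<chi> d}"

definition sset :: "nat \<Rightarrow> (nat \<Rightarrow> nat set) \<Rightarrow> (nat \<Rightarrow> nat set) \<Rightarrow> nat \<Rightarrow> nat set" where
  "sset n L \<chi> d = pset n L \<chi> d \<union> (if d = 0 then {} else qset n L \<chi> (d - 1))"

end

theory Submission
  imports Defs
begin

lemma successively_nth:
  "successively P xs \<longleftrightarrow> (\<forall>k. Suc k < length xs \<longrightarrow> P (xs!k) (xs!Suc k))"
proof (induction xs)
  case (Cons x xs)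
  show ?case
  proof (cases xs)
    case (Cons y ys)
    have "successively P (x # xs) \<longleftrightarrow> P x y \<and> successively P xs" using Cons by simp
    also have "\<dots> \<longleftrightarrow> P x y \<and> (\<forall>k. Suc k < length xs \<longrightarrow> P (xs!k) (xs!Suc k))" using Cons.IH by simp
    also have "\<dots> \<longleftrightarrow> (\<forall>k. Suc k < length (x#xs) \<longrightarrow> P ((x#xs)!k) ((x#xs)!Suc k))"
    proof
      assume h: "P x y \<and> (\<forall>k. Suc k < length xs \<longrightarrow> P (xs!k) (xs!Suc k))"
      show "\<forall>k. Suc k < length (x#xs) \<longrightarrow> P ((x#xs)!k) ((x#xs)!Suc k)"
      proof (intro allI impI)
        fix k assume "Suc k < length (x#xs)"
        then show "P ((x#xs)!k) ((x#xs)!Suc k)" using h Cons by (cases k) auto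
      qed
    next
      assume h: "\<forall>k. Suc k < length (x#xs) \<longrightarrow> P ((x#xs)!k) ((x#xs)!Suc k)"
      have "P x y" using h[rule_format, of 0] Cons by simp
      moreover have "\<forall>k. Suc k < length xs \<longrightarrow> P (xs!k) (xs!Suc k)"
      proof (intro allI impI)
        fix k assume "Suc k < length xs"
        then show "P (xs!k) (xs!Suc k)" using h[rule_format, of "Suc k"] by simp
      qed
      ultimately show "P x y \<and> (\<forall>k. Suc k < length xs \<longrightarrow> P (xs!k) (xs!Suc k))" by blast
    qed
    finally show ?thesis .
  qed simp
qed simp

lemma succ_trancl:
  "successively P ps \<Longrightarrow> length ps \<ge> 2 \<Longrightarrow> (hd ps, last ps) \<in> {(a,b). P a b}\<^sup>+"
proof (induction ps)
  case (Cons x xs)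
  show ?case
  proof (cases xs)
    case Nil
    then show ?thesis using Cons by auto
  next
    case (Cons y ys)
    note c = Cons
    show ?thesis
    proof (cases ys)
      case Nil
      then show ?thesis using Cons.prems c by auto
    next
      case (Cons z zs)
      then have "(hd xs, last xs) \<in> {(a,b). P a b}\<^sup>+" using Cons.prems c Cons.IH by simp
      moreover have "P x y" using Cons.prems c by simp
      ultimately show ?thesis using c by (auto intro: trancl_into_trancl2)
    qed
  qed
qed simp

lemma trancl_succ:
  assumes "(u,v) \<in> {(x,y). P x y}\<^sup>+"
  shows "\<exists>ps. length ps \<ge> 2 \<and> hd ps = u \<and> last ps = v \<and> successively P ps"
  using assms
proof (induction rule: trancl_induct)
  case (base y)
  then show ?case by (intro exI[of _ "[u,y]"]) auto
next
  case (step y z)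
  then obtain ps where ps: "length ps \<ge> 2" "hd ps = u" "last ps = y" "successively P ps" by blast
  have "successively P (ps @ [z])" using ps step by (auto simp: successively_append_iff)
  moreover have "hd (ps @ [z]) = u" using ps by (cases ps) auto
  ultimately show ?case using ps by (intro exI[of _ "ps @ [z]"]) auto
qed

lemma walk_to_path:
  "successively P ps \<Longrightarrow> ps \<noteq> [] \<Longrightarrow> \<exists>qs. distinct qs \<and> qs \<noteq> [] \<and> hd qs = hd ps \<and> last qs = last ps \<and> successively P qs"
proof (induction "length ps" arbitrary: ps rule: less_induct)
  case less
  show ?case
  proof (cases "distinct ps")
    case True
    then show ?thesis using less by blast
  next
    case False
    then obtain xs ys zs y where d: "ps = xs@[y]@ys@[y]@zs" using not_distinct_decomp by blast
    define ps' where "ps' = xs@[y]@zs"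
    have "length ps' < length ps" using d ps'_def by simp
    moreover have "successively P ps'" using less.prems d unfolding ps'_def
      by (auto simp: successively_append_iff successively_Cons)
    moreover have "ps' \<noteq> []" by (simp add: ps'_def)
    moreover have "hd ps' = hd ps" using d ps'_def by (cases xs) auto
    moreover have "last ps' = last ps" using d ps'_def by (cases zs) auto
    ultimately show ?thesis using less.hyps by metis
  qed
qed

definition Arc :: "nat \<Rightarrow> (nat \<Rightarrow> nat set) \<Rightarrow> (nat \<Rightarrow> nat set) \<Rightarrow> (nat \<times> nat) set" where
  "Arc n L \<chi> = {(i,j). arc n L \<chi> i j}"

lemma transfer_iff:
  "transfer n L \<chi> u v \<longleftrightarrow> (u,v) \<in> (Arc n L \<chi>)\<^sup>+ \<and> u \<noteq> v"
proof
  assume "transfer n L \<chi> u v"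
  then obtain ps where ps: "length ps \<ge> 2" "distinct ps" "hd ps = u" "last ps = v"
    "successively (arc n L \<chi>) ps"
    unfolding transfer_def successively_nth by blast
  have "u \<noteq> v"
  proof -
    have ne: "ps \<noteq> []" using ps(1) by auto
    have "hd ps = ps ! 0" using ne by (simp add: hd_conv_nth)
    moreover have "last ps = ps ! (length ps - 1)" using ne by (simp add: last_conv_nth)
    moreover have "0 \<noteq> length ps - 1" using ps(1) by simp
    ultimately show ?thesis using ps(2,3,4) nth_eq_iff_index_eq[OF ps(2), of 0 "length ps - 1"] ne by auto
  qed
  then show "(u,v) \<in> (Arc n L \<chi>)\<^sup>+ \<and> u \<noteq> v"
    using succ_trancl[OF ps(5) ps(1)] ps unfolding Arc_def by auto
next
  assume h: "(u,v) \<in> (Arc n L \<chi>)\<^sup>+ \<and> u \<noteq> v"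
  then obtain ps where ps: "length ps \<ge> 2" "hd ps = u" "last ps = v" "successively (arc n L \<chi>) ps"
    using trancl_succ[of u v "arc n L \<chi>"] unfolding Arc_def by auto
  then obtain qs where qs: "distinct qs" "qs \<noteq> []" "hd qs = u" "last qs = v" "successively (arc n L \<chi>) qs"
    using walk_to_path[OF ps(4)] by force
  have "length qs \<ge> 2"
  proof (rule ccontr)
    assume "\<not> length qs \<ge> 2"
    then obtain x where "qs = [x]" using qs(2) by (cases qs; cases "tl qs") auto
    then show False using qs h by auto
  qed
  then show "transfer n L \<chi> u v" unfolding transfer_def using qs successively_nth by blast
qed

definition H :: "(nat \<Rightarrow> nat set) \<Rightarrow> nat \<Rightarrow> int" where
  "H \<chi> i = int (card (\<chi> i))"

lemma alloc_fin: "is_alloc n m \<chi> \<Longrightarrow> i < n \<Longrightarrow> finite (\<chi> i)"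
  unfolding is_alloc_def by (meson finite_atLeastLessThan finite_subset)

lemma usw_clean: "clean n L \<chi> \<Longrightarrow> usw n L \<chi> = (\<Sum>i<n. card (\<chi> i))"
  unfolding usw_def clean_def by (intro sum.cong) (auto simp: Int_absorb2)

lemma sum_card_union: "is_alloc n m \<chi> \<Longrightarrow> (\<Sum>i<n. card (\<chi> i)) = card (\<Union>i<n. \<chi> i)"
  by (subst card_UN_disjoint) (auto simp: alloc_fin is_alloc_def)

lemma good_usw_eq: "good_alloc n m L \<chi> \<Longrightarrow> good_alloc n m L \<chi>' \<Longrightarrow> usw n L \<chi> = usw n L \<chi>'"
  unfolding good_alloc_def max_usw_def by (meson le_antisym)

lemma good_sum_eq: "good_alloc n m L \<chi> \<Longrightarrow> good_alloc n m L \<chi>' \<Longrightarrow> (\<Sum>i<n. H \<chi> i) = (\<Sum>i<n. H \<chi>' i)"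
proof -
  assume a: "good_alloc n m L \<chi>" "good_alloc n m L \<chi>'"
  have "(\<Sum>i<n. card (\<chi> i)) = (\<Sum>i<n. card (\<chi>' i))"
    using good_usw_eq[OF a] a usw_clean unfolding good_alloc_def by metis
  then show ?thesis unfolding H_def by (metis of_nat_sum)
qed

lemma move1:
  assumes g: "good_alloc n m L \<chi>" and a: "arc n L \<chi> u w"
  shows "\<exists>\<chi>1. good_alloc n m L \<chi>1 \<and> (\<forall>i. i \<noteq> u \<longrightarrow> \<chi> i \<subseteq> \<chi>1 i) \<and>
     (\<forall>i<n. H \<chi>1 i = H \<chi> i - (if i = u then 1 else 0) + (if i = w then 1 else 0))"
proof -
  obtain x0 where ox: "x0 \<in> \<chi> u" "x0 \<in> L w" and uw: "u < n" "w < n" "u \<noteq> w" using a unfolding arc_def by blast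
  have al: "is_alloc n m \<chi>" and cl: "clean n L \<chi>" and mx: "max_usw n m L \<chi>" using g unfolding good_alloc_def by auto
  have om: "x0 < m" using al ox uw unfolding is_alloc_def by fastforce
  have onot: "\<And>j. j < n \<Longrightarrow> j \<noteq> u \<Longrightarrow> x0 \<notin> \<chi> j" using al ox uw unfolding is_alloc_def by blast
  define \<chi>1 where "\<chi>1 = \<chi>(u := \<chi> u - {x0}, w := insert x0 (\<chi> w))"
  have al1: "is_alloc n m \<chi>1"
    using al om onot uw unfolding is_alloc_def \<chi>1_def by (auto; blast)
  have cl1: "clean n L \<chi>1" using cl ox uw unfolding clean_def \<chi>1_def by auto
  have un: "(\<Union>i<n. \<chi>1 i) = (\<Union>i<n. \<chi> i)"
    using uw ox unfolding \<chi>1_def by (auto split: if_splits)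
  have "usw n L \<chi>1 = usw n L \<chi>"
    using usw_clean[OF cl1] usw_clean[OF cl] sum_card_union[OF al1] sum_card_union[OF al] un by simp
  then have mx1: "max_usw n m L \<chi>1" using mx al1 unfolding max_usw_def by simp
  have fu: "finite (\<chi> u)" "finite (\<chi> w)" using alloc_fin[OF al] uw by auto
  have "\<forall>i<n. H \<chi>1 i = H \<chi> i - (if i = u then 1 else 0) + (if i = w then 1 else 0)"
  proof (intro allI impI)
    fix i assume "i < n"
    show "H \<chi>1 i = H \<chi> i - (if i = u then 1 else 0) + (if i = w then 1 else 0)"
    proof -
      have "card (\<chi> u) \<ge> 1" using ox fu by (metis One_nat_def Suc_leI card_gt_0_iff empty_iff)
      then show ?thesis using uw ox onot[OF uw(2)] fu unfolding H_def \<chi>1_def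
        by (auto simp: card_Diff_singleton of_nat_diff)
    qed
  qed
  moreover have "\<forall>i. i \<noteq> u \<longrightarrow> \<chi> i \<subseteq> \<chi>1 i" unfolding \<chi>1_def by auto
  ultimately show ?thesis using al1 cl1 mx1 unfolding good_alloc_def by blast
qed

lemma exec_path:
  "good_alloc n m L \<chi> \<Longrightarrow> distinct (u#ps) \<Longrightarrow> ps \<noteq> [] \<Longrightarrow> successively (arc n L \<chi>) (u#ps) \<Longrightarrow>
   \<exists>\<chi>'. good_alloc n m L \<chi>' \<and> (\<forall>i<n. H \<chi>' i = H \<chi> i - (if i = u then 1 else 0) + (if i = last ps then 1 else 0))"
proof (induction ps arbitrary: u \<chi>)
  case Nil
  then show ?case by simp
next
  case (Cons w rest)
  have a: "arc n L \<chi> u w" using Cons.prems by simp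
  obtain \<chi>1 where c1: "good_alloc n m L \<chi>1" "\<forall>i. i \<noteq> u \<longrightarrow> \<chi> i \<subseteq> \<chi>1 i"
    "\<forall>i<n. H \<chi>1 i = H \<chi> i - (if i = u then 1 else 0) + (if i = w then 1 else 0)"
    using move1[OF Cons.prems(1) a] by blast
  show ?case
  proof (cases "rest = []")
    case True
    then show ?thesis using c1 by auto
  next
    case False
    have s: "successively (arc n L \<chi>) (w#rest)" using Cons.prems(4) by simp
    have s1: "successively (arc n L \<chi>1) (w#rest)"
    proof (rule successively_mono[OF s])
      fix x y assume "x \<in> set (w#rest)" "arc n L \<chi> x y"
      moreover have "x \<noteq> u" using Cons.prems(2) \<open>x \<in> set (w#rest)\<close> by auto
      ultimately show "arc n L \<chi>1 x y" using c1(2) unfolding arc_def by blast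
    qed
    obtain \<chi>2 where c2: "good_alloc n m L \<chi>2"
      "\<forall>i<n. H \<chi>2 i = H \<chi>1 i - (if i = w then 1 else 0) + (if i = last rest then 1 else 0)"
      using Cons.IH[OF c1(1) _ False s1] Cons.prems(2) by auto
    show ?thesis using c1 c2 False by (intro exI[of _ \<chi>2]) auto
  qed
qed

lemma transfer_exec:
  assumes "good_alloc n m L \<chi>" "transfer n L \<chi> u v"
  shows "\<exists>\<chi>'. good_alloc n m L \<chi>' \<and> (\<forall>i<n. H \<chi>' i = H \<chi> i - (if i = u then 1 else 0) + (if i = v then 1 else 0))"
proof -
  obtain ps where ps: "length ps \<ge> 2" "distinct ps" "hd ps = u" "last ps = v"
    "successively (arc n L \<chi>) ps"
    using assms(2) unfolding transfer_def successively_nth by blast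
  then obtain ps' where "ps = u # ps'" "ps' \<noteq> []" by (cases ps; cases "tl ps") auto
  then show ?thesis using exec_path[OF assms(1), of u ps'] ps by auto
qed

lemma shift_sums:
  fixes f g :: "nat \<Rightarrow> int"
  assumes "u < n" "v < n" "u \<noteq> v"
    and "\<forall>i<n. g i = f i - (if i = u then 1 else 0) + (if i = v then 1 else 0)"
  shows "(\<Sum>i<n. g i) = (\<Sum>i<n. f i)"
    and "(\<Sum>i<n. (g i)^2) = (\<Sum>i<n. (f i)^2) + 2 * (f v - f u) + 2"
proof -
  have "(\<Sum>i<n. g i) = (\<Sum>i<n. f i + ((if i = v then 1 else 0) - (if i = u then 1 else 0)))"
    using assms(4) by (intro sum.cong) auto
  also have "\<dots> = (\<Sum>i<n. f i)" using assms(1-3) by (simp add: sum.distrib sum_subtractf)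
  finally show "(\<Sum>i<n. g i) = (\<Sum>i<n. f i)" .
  have "(\<Sum>i<n. (g i)^2) = (\<Sum>i<n. (f i)^2 + ((if i = u then 1 - 2 * f u else 0) + (if i = v then 2 * f v + 1 else 0)))"
  proof (intro sum.cong refl)
    fix i assume "i \<in> {..<n}"
    then have gi: "g i = f i - (if i = u then 1 else 0) + (if i = v then 1 else 0)" using assms(4) by auto
    show "(g i)^2 = (f i)^2 + ((if i = u then 1 - 2 * f u else 0) + (if i = v then 2 * f v + 1 else 0))"
    proof (cases "i = u")
      case True
      then have e: "g i = f i - 1" using gi assms(3) by simp
      show ?thesis unfolding e using True assms(3) by (simp add: power2_eq_square algebra_simps)
    next
      case False
      show ?thesis
      proof (cases "i = v")
        case True
        then have e: "g i = f i + 1" using gi assms(3) by simp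
        show ?thesis unfolding e using True assms(3) by (simp add: power2_eq_square algebra_simps)
      next
        case F2: False
        then have "g i = f i" using gi False by simp
        then show ?thesis using False F2 by simp
      qed
    qed
  qed
  also have "\<dots> = (\<Sum>i<n. (f i)^2) + (1 - 2 * f u) + (2 * f v + 1)"
    using assms(1-3) by (simp add: sum.distrib)
  finally show "(\<Sum>i<n. (g i)^2) = (\<Sum>i<n. (f i)^2) + 2 * (f v - f u) + 2" by simp
qed

lemma exchange:
  assumes g: "good_alloc n m L \<chi>" and g': "good_alloc n m L \<chi>'" and an: "a < n"
    and lt: "card (\<chi>' a) < card (\<chi> a)"
  shows "\<exists>b<n. transfer n L \<chi> a b \<and> transfer n L \<chi>' b a \<and> card (\<chi> b) < card (\<chi>' b)"
proof (rule ccontr)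
  assume nb: "\<not> ?thesis"
  have al: "is_alloc n m \<chi>" and cl: "clean n L \<chi>" using g unfolding good_alloc_def by auto
  have al': "is_alloc n m \<chi>'" and cl': "clean n L \<chi>'" and mx': "max_usw n m L \<chi>'"
    using g' unfolding good_alloc_def by auto
  define E where "E = {(c,d). c < n \<and> d < n \<and> c \<noteq> d \<and> \<chi> c \<inter> \<chi>' d \<noteq> {}}"
  have E1: "E \<subseteq> Arc n L \<chi>"
    using cl' unfolding E_def Arc_def arc_def clean_def by blast
  have E2: "E \<subseteq> (Arc n L \<chi>')\<inverse>"
    using cl unfolding E_def Arc_def arc_def clean_def by blast
  define R where "R = {c. c < n \<and> (a,c) \<in> E\<^sup>*}"
  have aR: "a \<in> R" using an unfolding R_def by auto
  have le: "card (\<chi>' c) \<le> card (\<chi> c)" if "c \<in> R" for c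
  proof (cases "c = a")
    case True then show ?thesis using lt by simp
  next
    case False
    have cn: "c < n" and "(a,c) \<in> E\<^sup>*" using that unfolding R_def by auto
    then have ac: "(a,c) \<in> E\<^sup>+" using False by (metis rtranclD)
    have t1: "transfer n L \<chi> a c" unfolding transfer_iff using False trancl_mono[OF ac E1] by simp
    have "(a,c) \<in> ((Arc n L \<chi>')\<inverse>)\<^sup>+" using trancl_mono[OF ac E2] .
    then have "(c,a) \<in> (Arc n L \<chi>')\<^sup>+" by (simp add: trancl_converse)
    then have t2: "transfer n L \<chi>' c a" unfolding transfer_iff using False by simp
    show ?thesis using nb t1 t2 cn by auto
  qed
  define \<chi>'' where "\<chi>'' = (\<lambda>i. if i \<in> R then \<chi> i else \<chi>' i)"
  have al'': "is_alloc n m \<chi>''"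
    unfolding is_alloc_def
  proof (intro conjI allI impI)
    fix i assume "i < n" then show "\<chi>'' i \<subseteq> {0..<m}" using al al' unfolding is_alloc_def \<chi>''_def by auto
  next
    fix i j assume ij: "i < n" "j < n" "i \<noteq> j"
    show "\<chi>'' i \<inter> \<chi>'' j = {}"
    proof (cases "i \<in> R"; cases "j \<in> R")
      assume "i \<in> R" "j \<in> R" then show ?thesis using al ij unfolding is_alloc_def \<chi>''_def by auto
    next
      assume "i \<notin> R" "j \<notin> R" then show ?thesis using al' ij unfolding is_alloc_def \<chi>''_def by auto
    next
      assume iR: "i \<in> R" and jR: "j \<notin> R"
      show ?thesis
      proof (rule ccontr)
        assume "\<chi>'' i \<inter> \<chi>'' j \<noteq> {}"
        then have "(i,j) \<in> E" using iR jR ij unfolding \<chi>''_def E_def by auto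
        then have "j \<in> R" using iR ij unfolding R_def by (auto intro: rtrancl_into_rtrancl)
        then show False using jR by simp
      qed
    next
      assume iR: "i \<notin> R" and jR: "j \<in> R"
      show ?thesis
      proof (rule ccontr)
        assume "\<chi>'' i \<inter> \<chi>'' j \<noteq> {}"
        then have "(j,i) \<in> E" using iR jR ij unfolding \<chi>''_def E_def by auto
        then have "i \<in> R" using jR ij unfolding R_def by (auto intro: rtrancl_into_rtrancl)
        then show False using iR by simp
      qed
    qed
  qed
  have cl'': "clean n L \<chi>''" using cl cl' unfolding clean_def \<chi>''_def by auto
  have "usw n L \<chi>'' \<le> usw n L \<chi>'" using mx' al'' unfolding max_usw_def by blast
  then have s1: "(\<Sum>i<n. card (\<chi>'' i)) \<le> (\<Sum>i<n. card (\<chi>' i))"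
    using usw_clean[OF cl''] usw_clean[OF cl'] by simp
  have "(\<Sum>i<n. card (\<chi>' i)) < (\<Sum>i<n. card (\<chi>'' i))"
  proof (rule sum_strict_mono_ex1)
    show "\<forall>x\<in>{..<n}. card (\<chi>' x) \<le> card (\<chi>'' x)" using le unfolding \<chi>''_def by auto
    show "\<exists>x\<in>{..<n}. card (\<chi>' x) < card (\<chi>'' x)" using aR an lt unfolding \<chi>''_def by auto
  qed simp
  then show False using s1 by simp
qed

definition SQ :: "nat \<Rightarrow> (nat \<Rightarrow> nat set) \<Rightarrow> int" where
  "SQ n \<chi> = (\<Sum>i<n. (H \<chi> i)^2)"

definition Dist :: "nat \<Rightarrow> (nat \<Rightarrow> nat set) \<Rightarrow> (nat \<Rightarrow> nat set) \<Rightarrow> int" where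
  "Dist n \<chi> \<chi>'' = (\<Sum>i<n. \<bar>H \<chi>'' i - H \<chi> i\<bar>)"

lemma stable_good: "stable n m L \<chi> \<Longrightarrow> good_alloc n m L \<chi>"
  unfolding stable_def by simp

lemma stable_no: "stable n m L \<chi> \<Longrightarrow> u < n \<Longrightarrow> v < n \<Longrightarrow> transfer n L \<chi> u v \<Longrightarrow> card (\<chi> u) < card (\<chi> v) + 2"
  unfolding stable_def by force

lemma transfer_ne: "transfer n L \<chi> u v \<Longrightarrow> u \<noteq> v"
  unfolding transfer_iff by simp

lemma sq_min_aux:
  assumes st: "stable n m L \<chi>"
  shows "good_alloc n m L \<chi>'' \<Longrightarrow> N = nat (Dist n \<chi> \<chi>'') \<Longrightarrow> SQ n \<chi> \<le> SQ n \<chi>''"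
proof (induction N arbitrary: \<chi>'' rule: less_induct)
  case (less N)
  have g: "good_alloc n m L \<chi>" using st by (rule stable_good)
  show ?case
  proof (cases "\<exists>a<n. card (\<chi>'' a) < card (\<chi> a)")
    case True
    then obtain a where a: "a < n" "card (\<chi>'' a) < card (\<chi> a)" by blast
    obtain b where b: "b < n" "transfer n L \<chi> a b" "transfer n L \<chi>'' b a" "card (\<chi> b) < card (\<chi>'' b)"
      using exchange[OF g less.prems(1) a] by blast
    have ab: "a \<noteq> b" using transfer_ne[OF b(2)] .
    have s1: "card (\<chi> a) < card (\<chi> b) + 2" using stable_no[OF st a(1) b(1) b(2)] .
    obtain \<chi>3 where c3: "good_alloc n m L \<chi>3"
      "\<forall>i<n. H \<chi>3 i = H \<chi>'' i - (if i = b then 1 else 0) + (if i = a then 1 else 0)"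
      using transfer_exec[OF less.prems(1) b(3)] by blast
    have sq3: "SQ n \<chi>3 = SQ n \<chi>'' + 2 * (H \<chi>'' a - H \<chi>'' b) + 2"
      unfolding SQ_def using shift_sums(2)[OF b(1) a(1) ab[symmetric] c3(2)] .
    have "H \<chi>'' a - H \<chi>'' b \<le> -1" using a b s1 unfolding H_def by linarith
    then have sq3le: "SQ n \<chi>3 \<le> SQ n \<chi>''" using sq3 by (smt (verit))
    have "Dist n \<chi> \<chi>'' = (\<Sum>i<n. \<bar>H \<chi>3 i - H \<chi> i\<bar> + ((if i = a then 1 else 0) + (if i = b then 1 else 0)))"
      unfolding Dist_def
    proof (intro sum.cong refl)
      fix i assume "i \<in> {..<n}"
      then have e: "H \<chi>3 i = H \<chi>'' i - (if i = b then 1 else 0) + (if i = a then 1 else 0)" using c3(2) by auto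
      show "\<bar>H \<chi>'' i - H \<chi> i\<bar> = \<bar>H \<chi>3 i - H \<chi> i\<bar> + ((if i = a then 1 else 0) + (if i = b then 1 else 0))"
        unfolding e using a b ab unfolding H_def by auto
    qed
    also have "\<dots> = Dist n \<chi> \<chi>3 + 2" unfolding Dist_def using a(1) b(1) ab by (simp add: sum.distrib)
    finally have "Dist n \<chi> \<chi>3 < Dist n \<chi> \<chi>''" by simp
    moreover have "Dist n \<chi> \<chi>3 \<ge> 0" unfolding Dist_def by (simp add: sum_nonneg)
    ultimately have "nat (Dist n \<chi> \<chi>3) < N" using less.prems(2) by linarith
    then have "SQ n \<chi> \<le> SQ n \<chi>3" using less.IH c3(1) by blast
    then show ?thesis using sq3le by linarith
  next
    case False
    then have le: "\<forall>i\<in>{..<n}. H \<chi> i \<le> H \<chi>'' i" unfolding H_def by auto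
    have eqs: "(\<Sum>i<n. H \<chi> i) = (\<Sum>i<n. H \<chi>'' i)" using good_sum_eq[OF g less.prems(1)] .
    have "\<forall>i\<in>{..<n}. H \<chi> i = H \<chi>'' i"
    proof (rule ccontr)
      assume "\<not> (\<forall>i\<in>{..<n}. H \<chi> i = H \<chi>'' i)"
      then have "\<exists>i\<in>{..<n}. H \<chi> i < H \<chi>'' i" using le by force
      then have "(\<Sum>i<n. H \<chi> i) < (\<Sum>i<n. H \<chi>'' i)" using le by (intro sum_strict_mono_ex1) auto
      then show False using eqs by simp
    qed
    then show ?thesis unfolding SQ_def by simp
  qed
qed

lemma sq_min: "stable n m L \<chi> \<Longrightarrow> good_alloc n m L \<chi>'' \<Longrightarrow> SQ n \<chi> \<le> SQ n \<chi>''"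
  using sq_min_aux by blast

lemma stable_of_sq:
  assumes st: "stable n m L \<chi>" and g': "good_alloc n m L \<chi>'" and sq: "SQ n \<chi>' \<le> SQ n \<chi>"
  shows "stable n m L \<chi>'"
proof -
  have "\<not> (\<exists>u<n. \<exists>v<n. transfer n L \<chi>' u v \<and> card (\<chi>' u) \<ge> card (\<chi>' v) + 2)"
  proof
    assume "\<exists>u<n. \<exists>v<n. transfer n L \<chi>' u v \<and> card (\<chi>' u) \<ge> card (\<chi>' v) + 2"
    then obtain u v where uv: "u < n" "v < n" "transfer n L \<chi>' u v" "card (\<chi>' u) \<ge> card (\<chi>' v) + 2" by blast
    obtain \<chi>2 where c2: "good_alloc n m L \<chi>2"
      "\<forall>i<n. H \<chi>2 i = H \<chi>' i - (if i = u then 1 else 0) + (if i = v then 1 else 0)"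
      using transfer_exec[OF g' uv(3)] by blast
    have "SQ n \<chi>2 = SQ n \<chi>' + 2 * (H \<chi>' v - H \<chi>' u) + 2"
      unfolding SQ_def using shift_sums(2)[OF uv(1,2) transfer_ne[OF uv(3)] c2(2)] .
    moreover have "H \<chi>' v - H \<chi>' u \<le> -2" using uv(4) unfolding H_def by linarith
    ultimately have "SQ n \<chi>2 < SQ n \<chi>" using sq by (smt (verit))
    then show False using sq_min[OF st c2(1)] by linarith
  qed
  then show ?thesis using g' unfolding stable_def by blast
qed

lemma claim1:
  assumes st: "stable n m L \<chi>" and st': "stable n m L \<chi>'" and i: "i < n"
  shows "card (\<chi>' i) = card (\<chi> i) \<or>
         (card (\<chi>' i) + 1 = card (\<chi> i) \<and> i \<in> pset n L \<chi> (card (\<chi> i))) \<or>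
         (card (\<chi>' i) = card (\<chi> i) + 1 \<and> i \<in> qset n L \<chi> (card (\<chi> i)))"
proof -
  have g: "good_alloc n m L \<chi>" and g': "good_alloc n m L \<chi>'" using st st' stable_good by auto
  consider "card (\<chi>' i) < card (\<chi> i)" | "card (\<chi>' i) = card (\<chi> i)" | "card (\<chi>' i) > card (\<chi> i)" by linarith
  then show ?thesis
  proof cases
    case 1
    obtain b where b: "b < n" "transfer n L \<chi> i b" "transfer n L \<chi>' b i" "card (\<chi> b) < card (\<chi>' b)"
      using exchange[OF g g' i 1] by blast
    have "card (\<chi> i) < card (\<chi> b) + 2" using stable_no[OF st i b(1) b(2)] .
    moreover have "card (\<chi>' b) < card (\<chi>' i) + 2" using stable_no[OF st' b(1) i b(3)] .
    ultimately have "card (\<chi>' i) + 1 = card (\<chi> i)" "int (card (\<chi> b)) = int (card (\<chi> i)) - 1"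
      using 1 b(4) by linarith+
    then show ?thesis using b i unfolding pset_def by blast
  next
    case 2 then show ?thesis by simp
  next
    case 3
    obtain b where b: "b < n" "transfer n L \<chi>' i b" "transfer n L \<chi> b i" "card (\<chi>' b) < card (\<chi> b)"
      using exchange[OF g' g i 3] by blast
    have "card (\<chi> b) < card (\<chi> i) + 2" using stable_no[OF st b(1) i b(3)] .
    moreover have "card (\<chi>' i) < card (\<chi>' b) + 2" using stable_no[OF st' i b(1) b(2)] .
    ultimately have "card (\<chi>' i) = card (\<chi> i) + 1" "card (\<chi> b) = card (\<chi> i) + 1"
      using 3 b(4) by linarith+
    then show ?thesis using b i unfolding qset_def by blast
  qed
qed

lemma claim2p:
  assumes st: "stable n m L \<chi>" and p: "i \<in> pset n L \<chi> d"
  shows "\<exists>\<chi>'. stable n m L \<chi>' \<and> card (\<chi>' i) + 1 = d"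
proof -
  have g: "good_alloc n m L \<chi>" using st stable_good by auto
  obtain j where j: "i < n" "card (\<chi> i) = d" "j < n" "int (card (\<chi> j)) = int d - 1" "transfer n L \<chi> i j"
    using p unfolding pset_def by blast
  obtain \<chi>' where c: "good_alloc n m L \<chi>'"
      "\<forall>k<n. H \<chi>' k = H \<chi> k - (if k = i then 1 else 0) + (if k = j then 1 else 0)"
    using transfer_exec[OF g j(5)] by blast
  have ij: "i \<noteq> j" using transfer_ne[OF j(5)] .
  have "SQ n \<chi>' = SQ n \<chi> + 2 * (H \<chi> j - H \<chi> i) + 2"
    unfolding SQ_def using shift_sums(2)[OF j(1,3) ij c(2)] .
  then have "SQ n \<chi>' = SQ n \<chi>" using j unfolding H_def by simp
  then have "stable n m L \<chi>'" using stable_of_sq[OF st c(1)] by simp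
  moreover have "H \<chi>' i = H \<chi> i - 1" using c(2) j(1) ij by simp
  ultimately show ?thesis using j unfolding H_def by (intro exI[of _ \<chi>']) auto
qed

lemma claim2q:
  assumes st: "stable n m L \<chi>" and q: "i \<in> qset n L \<chi> d"
  shows "\<exists>\<chi>'. stable n m L \<chi>' \<and> card (\<chi>' i) = d + 1"
proof -
  have g: "good_alloc n m L \<chi>" using st stable_good by auto
  obtain k where k: "i < n" "card (\<chi> i) = d" "k < n" "card (\<chi> k) = d + 1" "transfer n L \<chi> k i"
    using q unfolding qset_def by blast
  obtain \<chi>' where c: "good_alloc n m L \<chi>'"
      "\<forall>x<n. H \<chi>' x = H \<chi> x - (if x = k then 1 else 0) + (if x = i then 1 else 0)"
    using transfer_exec[OF g k(5)] by blast
  have ki: "k \<noteq> i" using transfer_ne[OF k(5)] .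
  have "SQ n \<chi>' = SQ n \<chi> + 2 * (H \<chi> i - H \<chi> k) + 2"
    unfolding SQ_def using shift_sums(2)[OF k(3,1) ki c(2)] .
  then have "SQ n \<chi>' = SQ n \<chi>" using k unfolding H_def by simp
  then have "stable n m L \<chi>'" using stable_of_sq[OF st c(1)] by simp
  moreover have "H \<chi>' i = H \<chi> i + 1" using c(2) k(1) ki by simp
  ultimately show ?thesis using k unfolding H_def by (intro exI[of _ \<chi>']) auto
qed

lemma pq_disj:
  assumes st: "stable n m L \<chi>" and p: "i \<in> pset n L \<chi> d" and q: "i \<in> qset n L \<chi> d"
  shows False
proof -
  obtain j where j: "i < n" "card (\<chi> i) = d" "j < n" "int (card (\<chi> j)) = int d - 1" "transfer n L \<chi> i j"
    using p unfolding pset_def by blast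
  obtain k where k: "k < n" "card (\<chi> k) = d + 1" "transfer n L \<chi> k i"
    using q unfolding qset_def by blast
  have "(k,j) \<in> (Arc n L \<chi>)\<^sup>+" using j(5) k(3) unfolding transfer_iff by auto
  moreover have "k \<noteq> j" using j(4) k(2) by auto
  ultimately have "transfer n L \<chi> k j" unfolding transfer_iff by simp
  then have "card (\<chi> k) < card (\<chi> j) + 2" using stable_no[OF st k(1) j(3)] by simp
  then show False using j(4) k(2) by linarith
qed

theorem lemma3:
  fixes n m :: nat and L \<chi> :: "nat \<Rightarrow> nat set"
  assumes "\<forall>i<n. L i \<subseteq> {0..<m}"
    and "stable n m L \<chi>"
  shows "(\<forall>d. layer n m L d = rset n L \<chi> d) \<and>
         (\<forall>d\<ge>1. layer_minus n m L d = sset n L \<chi> d)"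
proof (intro conjI allI impI)
  note st = assms(2)
  fix d
  show "layer n m L d = rset n L \<chi> d"
  proof (intro set_eqI iffI)
    fix i assume "i \<in> layer n m L d"
    then have i: "i < n" and all: "\<And>\<chi>'. stable n m L \<chi>' \<Longrightarrow> card (\<chi>' i) = d" unfolding layer_def by auto
    have hd: "card (\<chi> i) = d" using all[OF st] .
    have "i \<notin> pset n L \<chi> d"
    proof
      assume "i \<in> pset n L \<chi> d"
      then obtain \<chi>' where h: "stable n m L \<chi>'" "card (\<chi>' i) + 1 = d" using claim2p[OF st] by blast
      have "card (\<chi>' i) = d" using all[OF h(1)] .
      then show False using h(2) by simp
    qed
    moreover have "i \<notin> qset n L \<chi> d"
    proof
      assume "i \<in> qset n L \<chi> d"
      then obtain \<chi>' where h: "stable n m L \<chi>'" "card (\<chi>' i) = d + 1" using claim2q[OF st] by blast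
      have "card (\<chi>' i) = d" using all[OF h(1)] .
      then show False using h(2) by simp
    qed
    ultimately show "i \<in> rset n L \<chi> d" using i hd unfolding rset_def by auto
  next
    fix i assume "i \<in> rset n L \<chi> d"
    then have i: "i < n" "card (\<chi> i) = d" "i \<notin> pset n L \<chi> d" "i \<notin> qset n L \<chi> d" unfolding rset_def by auto
    have "card (\<chi>' i) = d" if "stable n m L \<chi>'" for \<chi>'
      using claim1[OF st that i(1)] i by auto
    then show "i \<in> layer n m L d" using i unfolding layer_def by auto
  qed
next
  note st = assms(2)
  fix d :: nat assume d1: "d \<ge> 1"
  show "layer_minus n m L d = sset n L \<chi> d"
  proof (intro set_eqI iffI)
    fix i assume "i \<in> layer_minus n m L d"
    then have i: "i < n" and S: "{card (\<chi>' i) | \<chi>'. stable n m L \<chi>'} = {d - 1, d}"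
      unfolding layer_minus_def by auto
    have mem: "\<And>x. x \<in> {d - 1, d} \<longleftrightarrow> (\<exists>\<chi>'. stable n m L \<chi>' \<and> x = card (\<chi>' i))"
      using S by blast
    have "card (\<chi> i) \<in> {d - 1, d}" using mem st by blast
    then consider "card (\<chi> i) = d" | "card (\<chi> i) = d - 1" by blast
    then show "i \<in> sset n L \<chi> d"
    proof cases
      case 1
      obtain \<chi>' where "stable n m L \<chi>'" "d - 1 = card (\<chi>' i)" using mem[of "d - 1"] by auto
      then have "i \<in> pset n L \<chi> d" using claim1[OF st _ i, of \<chi>'] 1 d1 by auto
      then show ?thesis unfolding sset_def by auto
    next
      case 2
      obtain \<chi>' where "stable n m L \<chi>'" "d = card (\<chi>' i)" using mem[of d] by auto
      then have "i \<in> qset n L \<chi> (d - 1)" using claim1[OF st _ i, of \<chi>'] 2 d1 by auto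
      then show ?thesis unfolding sset_def using d1 by auto
    qed
  next
    fix i assume "i \<in> sset n L \<chi> d"
    then consider "i \<in> pset n L \<chi> d" | "i \<in> qset n L \<chi> (d - 1)" unfolding sset_def using d1 by (auto split: if_splits)
    then show "i \<in> layer_minus n m L d"
    proof cases
      case 1
      then have i: "i < n" "card (\<chi> i) = d" unfolding pset_def by auto
      have nq: "i \<notin> qset n L \<chi> d" using pq_disj[OF st 1] by blast
      have "{card (\<chi>' i) | \<chi>'. stable n m L \<chi>'} = {d - 1, d}"
      proof (intro set_eqI iffI)
        fix x assume "x \<in> {card (\<chi>' i) | \<chi>'. stable n m L \<chi>'}"
        then obtain \<chi>' where "stable n m L \<chi>'" "x = card (\<chi>' i)" by blast
        then show "x \<in> {d - 1, d}" using claim1[OF st _ i(1), of \<chi>'] i nq by auto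
      next
        fix x assume x: "x \<in> {d - 1, d}"
        obtain \<chi>' where h: "stable n m L \<chi>'" "card (\<chi>' i) + 1 = d" using claim2p[OF st 1] by blast
        have "x = card (\<chi> i) \<or> x = card (\<chi>' i)" using x h(2) i(2) by auto
        then show "x \<in> {card (\<chi>' i) | \<chi>'. stable n m L \<chi>'}" using st h(1) by blast
      qed
      then show ?thesis using i unfolding layer_minus_def by auto
    next
      case 2
      then have i: "i < n" "card (\<chi> i) = d - 1" unfolding qset_def by auto
      have np: "i \<notin> pset n L \<chi> (d - 1)" using pq_disj[OF st _ 2] by blast
      have "{card (\<chi>' i) | \<chi>'. stable n m L \<chi>'} = {d - 1, d}"
      proof (intro set_eqI iffI)
        fix x assume "x \<in> {card (\<chi>' i) | \<chi>'. stable n m L \<chi>'}"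
        then obtain \<chi>' where "stable n m L \<chi>'" "x = card (\<chi>' i)" by blast
        then show "x \<in> {d - 1, d}" using claim1[OF st _ i(1), of \<chi>'] i np d1 by auto
      next
        fix x assume x: "x \<in> {d - 1, d}"
        obtain \<chi>' where h: "stable n m L \<chi>'" "card (\<chi>' i) = d - 1 + 1" using claim2q[OF st 2] by blast
        have "x = card (\<chi> i) \<or> x = card (\<chi>' i)" using x h(2) i(2) d1 by auto
        then show "x \<in> {card (\<chi>' i) | \<chi>'. stable n m L \<chi>'}" using st h(1) by blast
      qed
      then show ?thesis using i unfolding layer_minus_def by auto
    qed
  qed
qed

end
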